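(* In the following setting: $n$ training samples with labels in $\{1,\dots,K\}$, indicator matrix $F\in\mathbb{R}^{K\times n}$, $n_k$ samples in class $k$; basis $G_1,\dots,G_r$ ($r\le n$) a subset of the training samples with $r_k\ge1$ basis vectors in class $k$; $F_{G_i}$ the class indicator of $G_i$; $\tilde W\in\mathbb{R}^{r\times n}$ entrywise nonnegative, columns summing to one, full row rank, with $\tilde W_{ij}=0$ whenever $F_{G_i}\neq F_j$; $\tilde W'=\tilde W+\Delta W$ with $\Delta W\in\mathbb{R}^{r\times n}$; $\xi=\|\tilde W^\dagger\|_2\|\Delta W\|_2$, $\delta=\|\Delta W\|_F/\|\tilde W\|_F$, $n_\rho=\sqrt{\max_kn_k/\min_kn_k}$, $r_\rho=\sqrt{\max_kr_k/\min_kr_k}$; $X=F\tilde W^\dagger$, $X'=F\tilde W'^\dagger$, $\gamma=\|X\|_F^2\|\tilde W\|_F^2/\|X\tilde W\|_F^2$, $\gamma'=\|X'\|_F^2\|\tilde W'\|_F^2/\|X'\tilde W'\|_F^2$. If $\xi<1/n_\rho$, then $\delta\le\xi$ and $$\gamma'\le\gamma(1+\delta)^2\Big(\frac{1+r_\rho\xi}{1-n_\rho\xi}\Big)^2\le\gamma\frac{(1+r_\rho\xi)^4}{(1-n_\rho\xi)^2}.$$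
   Context: The columns of $F$ are standard basis vectors of $\mathbb{R}^K$: $F_j=e_k$ iff sample $j$ is in class $k$. $\|\cdot\|_2$ of a matrix is the spectral norm; $M^\dagger$ is the Moore–Penrose pseudo-inverse. *)

theory Defs
  imports "HOL-Analysis.Analysis"
begin

definition pinv :: "real^'n^'m \<Rightarrow> real^'m^'n" where
  "pinv A = (THE B. A ** B ** A = A \<and> B ** A ** B = B \<and>
                    transpose (A ** B) = A ** B \<and> transpose (B ** A) = B ** A)"

definition spec_norm :: "real^'n^'m \<Rightarrow> real" where
  "spec_norm A = onorm (\<lambda>x. A *v x)"

definition frob_norm :: "real^'n^'m \<Rightarrow> real" where
  "frob_norm A = sqrt (\<Sum>i\<in>UNIV. \<Sum>j\<in>UNIV. (A $ i $ j)\<^sup>2)"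

definition ind_mat :: "('n \<Rightarrow> 'k) \<Rightarrow> real^'n^'k" where
  "ind_mat lab = (\<chi> k j. if lab j = k then 1 else 0)"

end

theory Submission
  imports Defs
begin

lemma mm_add_r: "((A::real^'n^'m) + B) ** (C::real^'k^'n) = A ** C + B ** C"
  by (simp add: matrix_matrix_mult_def vec_eq_iff sum.distrib distrib_right)
lemma mm_diff_r: "((A::real^'n^'m) - B) ** (C::real^'k^'n) = A ** C - B ** C"
  by (simp add: matrix_matrix_mult_def vec_eq_iff sum_subtractf left_diff_distrib)
lemma mm_diff_l: "(A::real^'n^'m) ** ((B::real^'k^'n) - C) = A ** B - A ** C"
  by (simp add: matrix_matrix_mult_def vec_eq_iff sum_subtractf right_diff_distrib)
lemma transpose_diff: "transpose ((A::real^'n^'m) - B) = transpose A - transpose B"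
  by (simp add: transpose_def vec_eq_iff)

lemma inner_transpose: "inner (transpose A *v x) y = inner x ((A::real^'n^'m) *v y)"
  by (simp add: dot_lmul_matrix)

lemma spec_bound: "norm ((A::real^'n^'m) *v x) \<le> spec_norm A * norm x"
  unfolding spec_norm_def by (rule onorm) simp

lemma spec_nonneg: "0 \<le> spec_norm (A::real^'n^'m)"
  unfolding spec_norm_def by (rule onorm_pos_le) simp

lemma spec_le: assumes "\<And>x. norm ((A::real^'n^'m) *v x) \<le> b * norm x" shows "spec_norm A \<le> b"
  unfolding spec_norm_def by (rule onorm_le) (use assms in auto)

lemma spec_transpose: "spec_norm (transpose (A::real^'n^'m)) \<le> spec_norm A"
proof (rule spec_le)
  fix x
  let ?y = "transpose A *v x"
  have "(norm ?y)^2 = inner ?y ?y" by (simp add: dot_square_norm)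
  also have "\<dots> = inner x (A *v ?y)" by (rule inner_transpose)
  also have "\<dots> \<le> norm x * norm (A *v ?y)" by (rule norm_cauchy_schwarz)
  also have "\<dots> \<le> norm x * (spec_norm A * norm ?y)"
    by (rule mult_left_mono[OF spec_bound]) simp
  finally have h: "norm ?y * norm ?y \<le> (spec_norm A * norm x) * norm ?y"
    by (simp add: power2_eq_square algebra_simps)
  show "norm ?y \<le> spec_norm A * norm x"
  proof (cases "norm ?y = 0")
    case True then show ?thesis using spec_nonneg[of A] by simp
  next
    case False then show ?thesis using h by (simp add: mult_le_cancel_right)
  qed
qed

lemma spec_mult: "spec_norm ((A::real^'n^'m) ** (B::real^'k^'n)) \<le> spec_norm A * spec_norm B"
proof (rule spec_le)
  fix x
  have "norm ((A ** B) *v x) = norm (A *v (B *v x))" by (simp add: matrix_vector_mul_assoc)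
  also have "\<dots> \<le> spec_norm A * norm (B *v x)" by (rule spec_bound)
  also have "\<dots> \<le> spec_norm A * (spec_norm B * norm x)"
    by (rule mult_left_mono[OF spec_bound spec_nonneg])
  finally show "norm ((A ** B) *v x) \<le> spec_norm A * spec_norm B * norm x" by (simp add: mult.assoc)
qed

lemma spec_id_minus: "spec_norm (mat 1 - (A::real^'n^'n)) \<le> 1 + spec_norm A"
proof (rule spec_le)
  fix x
  have "norm ((mat 1 - A) *v x) = norm (x - A *v x)" by (simp add: matrix_vector_mult_diff_rdistrib)
  also have "\<dots> \<le> norm x + norm (A *v x)" by (rule norm_triangle_ineq4)
  also have "\<dots> \<le> norm x + spec_norm A * norm x" using spec_bound[of A x] by simp
  finally show "norm ((mat 1 - A) *v x) \<le> (1 + spec_norm A) * norm x" by (simp add: algebra_simps)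
qed

lemma frob_eq_norm: "frob_norm (A::real^'n^'m) = norm A"
  unfolding frob_norm_def norm_vec_def L2_set_def
  by (simp add: sum_nonneg)

lemma norm_sq_vec: "(norm (x::'a::real_normed_vector^'n))^2 = (\<Sum>i\<in>UNIV. (norm (x $ i))^2)"
  unfolding norm_vec_def L2_set_def by (simp add: sum_nonneg)

lemma norm_mm_le: "norm ((A::real^'n^'m) ** (B::real^'k^'n)) \<le> norm A * spec_norm B"
proof -
  have row: "(A ** B) $ i = transpose B *v (A $ i)" for i
    by (simp add: matrix_matrix_mult_def matrix_vector_mult_def transpose_def vec_eq_iff mult.commute)
  have "(norm (A ** B))^2 = (\<Sum>i\<in>UNIV. (norm ((A ** B) $ i))^2)" by (rule norm_sq_vec)
  also have "\<dots> \<le> (\<Sum>i\<in>UNIV. (spec_norm B * norm (A $ i))^2)"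
  proof (rule sum_mono)
    fix i
    have "norm ((A ** B) $ i) \<le> spec_norm (transpose B) * norm (A $ i)" unfolding row by (rule spec_bound)
    also have "\<dots> \<le> spec_norm B * norm (A $ i)" by (rule mult_right_mono[OF spec_transpose]) simp
    finally show "(norm ((A ** B) $ i))^2 \<le> (spec_norm B * norm (A $ i))^2"
      by (rule power_mono) simp
  qed
  also have "\<dots> = (spec_norm B * norm A)^2"
    by (simp add: power_mult_distrib norm_sq_vec[of A] sum_distrib_left)
  finally show ?thesis
    by (metis abs_of_nonneg mult.commute mult_nonneg_nonneg norm_ge_zero real_le_rsqrt real_sqrt_abs spec_nonneg)
qed

definition penrose :: "real^'n^'m \<Rightarrow> real^'m^'n \<Rightarrow> bool" where
  "penrose A B \<longleftrightarrow> A ** B ** A = A \<and> B ** A ** B = B \<and>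
                    transpose (A ** B) = A ** B \<and> transpose (B ** A) = B ** A"

lemma penrose_unique:
  assumes "penrose A B" "penrose A C" shows "B = C"
proof -
  have a1: "A ** B ** A = A" "B ** A ** B = B" "transpose (A ** B) = A ** B" "transpose (B ** A) = B ** A"
    using assms(1) unfolding penrose_def by auto
  have c1: "A ** C ** A = A" "C ** A ** C = C" "transpose (A ** C) = A ** C" "transpose (C ** A) = C ** A"
    using assms(2) unfolding penrose_def by auto
  have "B = B ** (A ** B)" using a1(2) by (simp add: matrix_mul_assoc)
  also have "\<dots> = B ** transpose (A ** B)" using a1(3) by simp
  also have "\<dots> = B ** transpose B ** transpose A" by (simp add: matrix_transpose_mul matrix_mul_assoc)
  also have "\<dots> = B ** transpose B ** transpose (A ** C ** A)" using c1(1) by simp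
  also have "\<dots> = B ** (transpose (A ** B)) ** transpose (A ** C)"
    by (simp add: matrix_transpose_mul matrix_mul_assoc)
  also have "\<dots> = B ** A ** B ** A ** C" using a1(3) c1(3) by (simp add: matrix_mul_assoc)
  also have "\<dots> = B ** A ** C" using a1(2) by simp
  finally have b: "B = B ** A ** C" .
  have "C = (C ** A) ** C" using c1(2) by simp
  also have "\<dots> = transpose (C ** A) ** C" using c1(4) by simp
  also have "\<dots> = transpose A ** transpose C ** C" by (simp add: matrix_transpose_mul matrix_mul_assoc)
  also have "\<dots> = transpose (A ** B ** A) ** transpose C ** C" using a1(1) by simp
  also have "\<dots> = transpose (B ** A) ** transpose (C ** A) ** C"
    by (simp add: matrix_transpose_mul matrix_mul_assoc)
  also have "\<dots> = B ** A ** (C ** A ** C)" using a1(4) c1(4) by (simp add: matrix_mul_assoc)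
  also have "\<dots> = B ** A ** C" using c1(2) by simp
  finally show ?thesis using b by simp
qed

lemma gram_invertible:
  fixes A :: "real^'n^'m"
  assumes inj: "\<And>x. transpose A *v x = 0 \<Longrightarrow> x = 0"
  shows "invertible (A ** transpose A)"
proof -
  have "\<forall>x. (A ** transpose A) *v x = 0 \<longrightarrow> x = 0"
  proof (intro allI impI)
    fix x assume "(A ** transpose A) *v x = 0"
    then have "inner x (A *v (transpose A *v x)) = 0" by (metis matrix_vector_mul_assoc inner_zero_right)
    then have "inner (transpose A *v x) (transpose A *v x) = 0" by (simp only: inner_transpose)
    then show "x = 0" using inj by simp
  qed
  then show ?thesis
    using matrix_left_invertible_ker invertible_left_inverse by blast
qed

lemma penrose_exists:
  fixes A :: "real^'n^'m"
  assumes inj: "\<And>x. transpose A *v x = 0 \<Longrightarrow> x = 0"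
  shows "\<exists>B. penrose A B \<and> A ** B = mat 1"
proof -
  let ?S = "A ** transpose A"
  obtain M where M1: "?S ** M = mat 1" and M2: "M ** ?S = mat 1"
    using gram_invertible[OF inj] unfolding invertible_def by blast
  have St: "transpose ?S = ?S" by (simp add: matrix_transpose_mul)
  have "transpose M ** ?S = mat 1"
    using arg_cong[OF M1, of transpose] St by (simp add: matrix_transpose_mul)
  then have Mt: "transpose M = M"
    by (metis M1 matrix_mul_assoc matrix_mul_lid matrix_mul_rid)
  let ?B = "transpose A ** M"
  have AB: "A ** ?B = mat 1" using M1 by (simp add: matrix_mul_assoc)
  have "penrose A ?B"
    unfolding penrose_def
  proof (intro conjI)
    show "A ** ?B ** A = A" using AB by simp
    show "?B ** A ** ?B = ?B" using AB by (metis matrix_mul_assoc matrix_mul_rid)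
    show "transpose (A ** ?B) = A ** ?B" using AB by simp
    show "transpose (?B ** A) = ?B ** A"
      using Mt by (simp add: matrix_transpose_mul matrix_mul_assoc)
  qed
  then show ?thesis using AB by blast
qed

lemma pinv_props:
  fixes A :: "real^'n^'m"
  assumes inj: "\<And>x. transpose A *v x = 0 \<Longrightarrow> x = 0"
  shows "penrose A (pinv A)" "A ** pinv A = mat 1"
proof -
  obtain B where B: "penrose A B" "A ** B = mat 1" using penrose_exists[OF inj] by blast
  have "pinv A = B"
    unfolding pinv_def
  proof (rule the_equality)
    show "A ** B ** A = A \<and> B ** A ** B = B \<and> transpose (A ** B) = A ** B \<and> transpose (B ** A) = B ** A"
      using B(1) unfolding penrose_def .
    fix C assume "A ** C ** A = A \<and> C ** A ** C = C \<and> transpose (A ** C) = A ** C \<and> transpose (C ** A) = C ** A"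
    then have "penrose A C" unfolding penrose_def .
    then show "C = B" using penrose_unique B(1) by blast
  qed
  then show "penrose A (pinv A)" "A ** pinv A = mat 1" using B by auto
qed

lemma transpose_add': "transpose ((A::real^'n^'m) + B) = transpose A + transpose B"
  by (simp add: transpose_def vec_eq_iff)

lemma perturb:
  fixes W dW :: "real^'n^'r"
  assumes inj: "\<And>x. transpose W *v x = 0 \<Longrightarrow> x = 0"
    and small: "spec_norm (pinv W) * spec_norm dW < 1"
  shows "0 < spec_norm (pinv W)"
    and "W ** pinv W = mat 1"
    and "penrose (W + dW) (pinv (W + dW))"
    and "(W + dW) ** pinv (W + dW) = mat 1"
    and "spec_norm (pinv (W + dW)) \<le> spec_norm (pinv W) / (1 - spec_norm (pinv W) * spec_norm dW)"
    and "norm dW \<le> norm W * (spec_norm (pinv W) * spec_norm dW)"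
proof -
  define B where "B = pinv W"
  define a where "a = spec_norm B"
  define s where "s = spec_norm dW"
  define W' where "W' = W + dW"
  define B' where "B' = pinv W'"
  have xi: "a * s < 1" using small by (simp add: a_def s_def B_def)
  have a0: "0 \<le> a" "0 \<le> s" by (simp_all add: a_def s_def spec_nonneg)
  have WB: "W ** B = mat 1" using pinv_props(2)[OF inj] by (simp add: B_def)
  show "W ** pinv W = mat 1" using WB by (simp add: B_def)
  have "norm (mat 1 :: real^'r^'r) \<le> norm W * a"
    using norm_mm_le[of W B] WB by (simp add: a_def)
  moreover have "(mat 1 :: real^'r^'r) \<noteq> 0"
  proof
    assume "(mat 1 :: real^'r^'r) = 0"
    then have "(mat 1 :: real^'r^'r) $ undefined $ undefined = 0" by simp
    then show False by (simp add: mat_def)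
  qed
  ultimately have apos: "0 < a" using a0 by (cases "a = 0") auto
  then show "0 < spec_norm (pinv W)" by (simp add: a_def B_def)
  have A1: "norm y \<le> a * norm (transpose W *v y)" for y
  proof -
    have "transpose B ** transpose W = mat 1" using WB by (metis matrix_transpose_mul transpose_mat)
    then have "y = transpose B *v (transpose W *v y)" by (metis matrix_vector_mul_assoc matrix_vector_mul_lid)
    then have "norm y = norm (transpose B *v (transpose W *v y))" by simp
    also have "\<dots> \<le> spec_norm (transpose B) * norm (transpose W *v y)" by (rule spec_bound)
    also have "\<dots> \<le> a * norm (transpose W *v y)"
      unfolding a_def by (rule mult_right_mono[OF spec_transpose]) simp
    finally show ?thesis .
  qed
  have A2: "(1 - a * s) * norm y \<le> a * norm (transpose W' *v y)" for y
  proof -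
    have "transpose W *v y = transpose W' *v y - transpose dW *v y"
      by (simp add: W'_def transpose_add' matrix_vector_mult_add_rdistrib)
    then have "norm (transpose W *v y) \<le> norm (transpose W' *v y) + norm (transpose dW *v y)"
      by (simp add: norm_triangle_ineq4)
    also have "norm (transpose dW *v y) \<le> s * norm y"
      using spec_bound[of "transpose dW" y] spec_transpose[of dW]
      by (metis mult_right_mono norm_ge_zero order_trans s_def)
    finally have "norm (transpose W *v y) \<le> norm (transpose W' *v y) + s * norm y" by simp
    then have "a * norm (transpose W *v y) \<le> a * norm (transpose W' *v y) + a * s * norm y"
      using mult_left_mono[OF _ a0(1)] by (metis distrib_left mult.assoc)
    then show ?thesis using A1[of y] by (simp add: algebra_simps)
  qed
  have inj': "transpose W' *v y = 0 \<Longrightarrow> y = 0" for y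
    using A2[of y] xi by (simp add: mult_le_0_iff)
  have P': "penrose W' B'" and WB': "W' ** B' = mat 1" using pinv_props[OF inj'] by (simp_all add: B'_def)
  then show "penrose (W + dW) (pinv (W + dW))" "(W + dW) ** pinv (W + dW) = mat 1"
    by (simp_all add: W'_def B'_def)
  have Bfact: "B' = transpose W' ** transpose B' ** B'"
  proof -
    have "B' = (B' ** W') ** B'" using P' unfolding penrose_def by simp
    also have "\<dots> = transpose (B' ** W') ** B'" using P' unfolding penrose_def by simp
    finally show ?thesis by (simp only: matrix_transpose_mul)
  qed
  have "norm (B' *v z) \<le> a / (1 - a * s) * norm z" for z
  proof -
    define y where "y = transpose B' *v (B' *v z)"
    have hby: "B' *v z = transpose W' *v y"
    proof -
      have e1: "B' *v z = (transpose W' ** transpose B' ** B') *v z" by (rule arg_cong[OF Bfact])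
      have e2: "(transpose W' ** transpose B' ** B') *v z = transpose W' *v y"
        unfolding y_def by (simp only: matrix_vector_mul_assoc matrix_mul_assoc)
      from e1 e2 show ?thesis by (rule trans)
    qed
    have zy: "z = W' *v (transpose W' *v y)"
      by (metis hby WB' matrix_vector_mul_assoc matrix_vector_mul_lid)
    let ?v = "transpose W' *v y"
    have "(norm ?v)^2 = inner ?v ?v" by (simp add: dot_square_norm)
    also have "\<dots> = inner y z" by (simp only: inner_transpose zy)
    also have "\<dots> \<le> norm y * norm z" by (rule norm_cauchy_schwarz)
    finally have h1: "(norm ?v)^2 \<le> norm y * norm z" .
    have h2: "(1 - a * s) * norm y \<le> a * norm ?v" by (rule A2)
    have "(1 - a * s) * norm ?v * norm ?v \<le> (1 - a * s) * (norm y * norm z)"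
      using h1 xi by (simp add: power2_eq_square mult.assoc)
    also have "\<dots> = ((1 - a * s) * norm y) * norm z" by simp
    also have "\<dots> \<le> a * norm ?v * norm z" using h2 by (simp add: mult_right_mono)
    finally have h3: "(1 - a * s) * norm ?v * norm ?v \<le> a * norm z * norm ?v" by (simp add: algebra_simps)
    have "(1 - a * s) * norm ?v \<le> a * norm z"
    proof (cases "norm ?v = 0")
      case True then show ?thesis using apos by simp
    next
      case False then show ?thesis using h3 by (simp add: mult_le_cancel_right)
    qed
    then show ?thesis using xi by (simp add: hby field_simps)
  qed
  then have "spec_norm B' \<le> a / (1 - a * s)" by (rule spec_le)
  then show "spec_norm (pinv (W + dW)) \<le> spec_norm (pinv W) / (1 - spec_norm (pinv W) * spec_norm dW)"
    by (simp add: B'_def W'_def a_def s_def B_def)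
  have "dW = W ** (B ** dW)" using WB by (simp add: matrix_mul_assoc)
  then have "norm dW \<le> norm W * spec_norm (B ** dW)" by (metis norm_mm_le)
  also have "\<dots> \<le> norm W * (a * s)"
    by (rule mult_left_mono) (simp_all add: a_def s_def spec_mult)
  finally show "norm dW \<le> norm W * (spec_norm (pinv W) * spec_norm dW)" by (simp add: a_def s_def B_def)
qed

lemma spec_proj:
  fixes P :: "real^'n^'n"
  assumes "transpose P = P" "P ** P = P"
  shows "spec_norm (mat 1 - P) \<le> 1"
proof (rule spec_le)
  fix x
  define Q where "Q = mat 1 - P"
  have Qt: "transpose Q = Q" using assms(1) by (simp add: Q_def transpose_diff)
  have QQ: "Q ** Q = Q" using assms(2) by (simp add: Q_def mm_diff_l mm_diff_r)
  have "(norm (Q *v x))^2 = inner (Q *v x) (Q *v x)" by (simp add: dot_square_norm)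
  also have "\<dots> = inner (transpose Q *v x) (Q *v x)" using Qt by simp
  also have "\<dots> = inner x (Q *v (Q *v x))" by (rule inner_transpose)
  also have "\<dots> = inner x (Q *v x)" by (simp only: matrix_vector_mul_assoc QQ)
  also have "\<dots> \<le> norm x * norm (Q *v x)" by (rule norm_cauchy_schwarz)
  finally have h: "norm (Q *v x) * norm (Q *v x) \<le> norm x * norm (Q *v x)" by (simp add: power2_eq_square)
  show "norm ((mat 1 - P) *v x) \<le> 1 * norm x"
  proof (cases "norm (Q *v x) = 0")
    case True then show ?thesis by (simp add: Q_def)
  next
    case False then show ?thesis using h by (simp add: Q_def mult_le_cancel_right)
  qed
qed

lemma rho_ge1:
  fixes c :: "'k::finite \<Rightarrow> nat"
  assumes "\<And>k. c k \<ge> 1"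
  shows "1 \<le> sqrt (real (Max (range c)) / real (Min (range c)))"
proof -
  have fin: "finite (range c)" and ne: "range c \<noteq> {}" by auto
  have "Min (range c) \<in> range c" using Min_in[OF fin ne] .
  then have m1: "Min (range c) \<ge> 1" using assms by auto
  have "Max (range c) \<ge> Min (range c)" using Max_ge[OF fin \<open>Min (range c) \<in> range c\<close>] .
  then have "real (Max (range c)) \<ge> real (Min (range c))" by simp
  then have "real (Max (range c)) / real (Min (range c)) \<ge> 1" using m1 by (auto simp add: le_divide_eq Suc_le_eq)
  then show ?thesis by simp
qed

lemma final_real:
  fixes e f a s N D w w' d rr nr :: real
  assumes e0: "0 \<le> e" and f0: "0 < f" and a0: "0 < a" and s0: "0 \<le> s" and xi1: "a * s < 1"
   and N0: "0 \<le> N" and D0: "0 \<le> D"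
   and hN1: "N \<le> e / (1 - a * s)" and hD: "f - e * s \<le> D" and hN2: "N \<le> D * (a / (1 - a * s))"
   and w0: "0 < w" and d0: "0 \<le> d" and hw: "w' \<le> w + d" and w'0: "0 \<le> w'"
   and rr: "1 \<le> rr" and nr: "1 \<le> nr" and nxi: "nr * (a * s) < 1"
  shows "N^2 * w'^2 / D^2 \<le> e^2 * w^2 / f^2 * (1 + d / w)^2 * ((1 + rr * (a * s)) / (1 - nr * (a * s)))^2"
proof -
  define x where "x = a * s"
  have x0: "0 \<le> x" and x1: "x < 1" using a0 s0 xi1 by (simp_all add: x_def)
  have nx: "nr * x < 1" using nxi by (simp add: x_def)
  have key: "N * (1 - x) * f \<le> D * e * (1 + x)"
  proof (cases "a * f \<le> e * (1 + x)")
    case True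
    have "N * (1 - x) \<le> D * a" using hN2 x1 by (simp add: x_def field_simps)
    then have "N * (1 - x) * f \<le> D * a * f" using f0 by (simp add: mult_right_mono)
    also have "\<dots> = D * (a * f)" by simp
    also have "\<dots> \<le> D * (e * (1 + x))" using True D0 by (simp add: mult_left_mono)
    finally show ?thesis by simp
  next
    case False
    have "e * (1 + x) * x \<le> a * f * x" using False x0 by (simp add: mult_right_mono)
    then have "(e * s * (1 + x)) * a \<le> (x * f) * a" by (simp add: x_def algebra_simps)
    then have "e * s * (1 + x) \<le> x * f" using a0 by simp
    then have "f \<le> (f - e * s) * (1 + x)" by (simp add: algebra_simps)
    also have "\<dots> \<le> D * (1 + x)" using hD x0 by (simp add: mult_right_mono)
    finally have fD: "f \<le> D * (1 + x)" .
    have "N * (1 - x) \<le> e" using hN1 x1 by (simp add: x_def field_simps)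
    then have "N * (1 - x) * f \<le> e * f" using f0 by (simp add: mult_right_mono)
    also have "\<dots> \<le> e * (D * (1 + x))" using fD e0 by (simp add: mult_left_mono)
    finally show ?thesis by (simp add: ac_simps)
  qed
  have q: "(1 + x) / (1 - x) \<le> (1 + rr * x) / (1 - nr * x)"
  proof -
    have "0 \<le> x * ((rr - 1) * (1 - x) + (nr - 1) * (1 + x))"
      using x0 x1 rr nr by (simp add: mult_nonneg_nonneg)
    then have "(1 + x) * (1 - nr * x) \<le> (1 + rr * x) * (1 - x)" by (simp add: algebra_simps)
    then show ?thesis using x1 nx by (simp add: divide_simps)
  qed
  define q2 where "q2 = (1 + rr * x) / (1 - nr * x)"
  have q20: "0 \<le> q2" using x0 rr nx unfolding q2_def by simp
  show ?thesis
  proof (cases "D = 0")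
    case True
    then show ?thesis by simp
  next
    case False
    then have Dp: "0 < D" using D0 by simp
    have x1': "0 < 1 - x" using x1 by simp
    have "N / D \<le> e / f * ((1 + x) / (1 - x))"
      using key Dp f0 x1' by (simp add: field_simps)
    also have "\<dots> \<le> e / f * q2" unfolding q2_def
      by (rule mult_left_mono[OF q]) (use e0 f0 in simp)
    finally have r1: "N / D \<le> e / f * q2" .
    have r2: "w' \<le> w * (1 + d / w)" using hw w0 by (simp add: distrib_left)
    have "N / D * w' \<le> (e / f * q2) * (w * (1 + d / w))"
      by (rule mult_mono[OF r1 r2]) (use e0 f0 q20 w'0 in simp_all)
    then have "(N / D * w')^2 \<le> ((e / f * q2) * (w * (1 + d / w)))^2"
      by (rule power_mono) (use N0 D0 w'0 in simp)
    moreover have "(N / D * w')^2 = N^2 * w'^2 / D^2" by (simp add: power_mult_distrib power_divide)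
    moreover have "((e / f * q2) * (w * (1 + d / w)))^2 = e^2 * w^2 / f^2 * (1 + d / w)^2 * q2^2"
      by (simp add: power_mult_distrib power_divide)
    ultimately show ?thesis unfolding q2_def x_def by simp
  qed
qed

theorem corollary2:
  fixes lab :: "'n::finite \<Rightarrow> 'k::finite"
    and G :: "'r::finite \<Rightarrow> 'n"
    and W dW :: "real^'n^'r"
  assumes G_inj: "inj G"
    and r_k: "\<And>k. card {i. lab (G i) = k} \<ge> 1"
    and W_nonneg: "\<And>i j. W $ i $ j \<ge> 0"
    and W_cols: "\<And>j. (\<Sum>i\<in>UNIV. W $ i $ j) = 1"
    and W_rank: "rank W = CARD('r)"
    and W_supp: "\<And>i j. lab (G i) \<noteq> lab j \<Longrightarrow> W $ i $ j = 0"
    and xi_small: "spec_norm (pinv W) * spec_norm dW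
       < 1 / sqrt (real (Max (range (\<lambda>k. card {j. lab j = k})))
                   / real (Min (range (\<lambda>k. card {j. lab j = k}))))"
  shows
    "let F = ind_mat lab;
         W' = W + dW;
         xi = spec_norm (pinv W) * spec_norm dW;
         delta = frob_norm dW / frob_norm W;
         n_rho = sqrt (real (Max (range (\<lambda>k. card {j. lab j = k})))
                       / real (Min (range (\<lambda>k. card {j. lab j = k}))));
         r_rho = sqrt (real (Max (range (\<lambda>k. card {i. lab (G i) = k})))
                       / real (Min (range (\<lambda>k. card {i. lab (G i) = k}))));
         X = F ** pinv W;
         X' = F ** pinv W';
         gamma = (frob_norm X)\<^sup>2 * (frob_norm W)\<^sup>2 / (frob_norm (X ** W))\<^sup>2;
         gamma' = (frob_norm X')\<^sup>2 * (frob_norm W')\<^sup>2 / (frob_norm (X' ** W'))\<^sup>2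
     in delta \<le> xi
        \<and> gamma' \<le> gamma * (1 + delta)\<^sup>2 * ((1 + r_rho * xi) / (1 - n_rho * xi))\<^sup>2
        \<and> gamma * (1 + delta)\<^sup>2 * ((1 + r_rho * xi) / (1 - n_rho * xi))\<^sup>2
            \<le> gamma * (1 + r_rho * xi) ^ 4 / (1 - n_rho * xi)\<^sup>2"
proof -
  define E :: "real^'r^'k" where "E = (\<chi> k i. if lab (G i) = k then 1 else 0)"
  define F where "F = ind_mat lab"
  define W' where "W' = W + dW"
  define B where "B = pinv W"
  define B' where "B' = pinv W'"
  define a where "a = spec_norm B"
  define s where "s = spec_norm dW"
  define nr where "nr = sqrt (real (Max (range (\<lambda>k. card {j. lab j = k})))
                       / real (Min (range (\<lambda>k. card {j. lab j = k}))))"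
  define rr where "rr = sqrt (real (Max (range (\<lambda>k. card {i. lab (G i) = k})))
                       / real (Min (range (\<lambda>k. card {i. lab (G i) = k}))))"
  have FE: "F = E ** W"
  proof -
    have "(\<Sum>i\<in>UNIV. (if lab (G i) = k then 1 else 0) * W$i$j) = (if lab j = k then 1 else 0)" for k j
    proof (cases "lab j = k")
      case True
      have "(\<Sum>i\<in>UNIV. (if lab (G i) = k then 1 else 0) * W$i$j) = (\<Sum>i\<in>UNIV. W$i$j)"
        by (rule sum.cong) (use True W_supp in auto)
      then show ?thesis using W_cols True by simp
    next
      case False
      have "(\<Sum>i\<in>UNIV. (if lab (G i) = k then 1 else 0) * W$i$j) = 0"
        by (rule sum.neutral) (use False W_supp in auto)
      then show ?thesis using False by simp
    qed
    then show ?thesis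
      unfolding F_def E_def ind_mat_def by (simp add: vec_eq_iff matrix_matrix_mult_def)
  qed
  have inj: "transpose W *v x = 0 \<Longrightarrow> x = 0" for x
  proof -
    assume h: "transpose W *v x = 0"
    have "rank (transpose W) = CARD('r)" using W_rank rank_transpose by metis
    then have "inj ((*v) (transpose W))" by (simp add: full_rank_injective)
    then show "x = 0" using h by (metis injD matrix_vector_mult_0_right)
  qed
  have cr1: "\<And>k. card {i. lab (G i) = k} \<ge> 1" by (rule r_k)
  have cn1: "\<And>k. card {j. lab j = k} \<ge> 1"
  proof -
    fix k
    have "{i. lab (G i) = k} \<noteq> {}" using r_k[of k] by (metis card.empty not_one_le_zero)
    then obtain i where "lab (G i) = k" by auto
    then have "G i \<in> {j. lab j = k}" by simp
    then have "card {j. lab j = k} > 0" by (simp add: card_gt_0_iff) blast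
    then show "card {j. lab j = k} \<ge> 1" by simp
  qed
  have nr1: "1 \<le> nr" unfolding nr_def by (rule rho_ge1) (rule cn1)
  have rr1: "1 \<le> rr" unfolding rr_def by (rule rho_ge1) (rule cr1)
  have xnr: "a * s < 1 / nr" using xi_small by (simp add: a_def s_def B_def nr_def)
  have nxi: "nr * (a * s) < 1" using xnr nr1 by (simp add: field_simps)
  have a0: "0 \<le> a" "0 \<le> s" by (simp_all add: a_def s_def spec_nonneg)
  have xi1: "a * s < 1"
  proof -
    have "a * s \<le> nr * (a * s)" using mult_right_mono[OF nr1 mult_nonneg_nonneg[OF a0]] by simp
    then show ?thesis using nxi by simp
  qed
  have small: "spec_norm (pinv W) * spec_norm dW < 1" using xi1 by (simp add: a_def s_def B_def)
  note pt = perturb[OF inj small]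
  have apos: "0 < a" using pt(1) by (simp add: a_def B_def)
  have WB: "W ** B = mat 1" using pt(2) by (simp add: B_def)
  have P': "penrose W' B'" using pt(3) by (simp add: B'_def W'_def)
  have WB': "W' ** B' = mat 1" using pt(4) by (simp add: B'_def W'_def)
  have sB': "spec_norm B' \<le> a / (1 - a * s)" using pt(5) by (simp add: B'_def W'_def a_def s_def B_def)
  have dW: "norm dW \<le> norm W * (a * s)" using pt(6) by (simp add: a_def s_def B_def)
  have mat1ne: "(mat 1 :: real^'r^'r) \<noteq> 0"
  proof
    assume "(mat 1 :: real^'r^'r) = 0"
    then have "(mat 1 :: real^'r^'r) $ undefined $ undefined = 0" by simp
    then show False by (simp add: mat_def)
  qed
  have w0: "0 < norm W"
  proof -
    have "W \<noteq> 0" using WB mat1ne by auto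
    then show ?thesis by simp
  qed
  have f0: "0 < norm F"
  proof -
    have "F $ lab undefined $ undefined = 1" by (simp add: F_def ind_mat_def)
    then have "F \<noteq> 0" by auto
    then show ?thesis by simp
  qed
  have X: "F ** B = E" using FE WB by (simp add: matrix_mul_assoc[symmetric])
  have XW: "F ** B ** W = F" using X FE by simp
  have WB'2: "W ** B' = mat 1 - dW ** B'"
  proof -
    have "W = W' - dW" by (simp add: W'_def)
    then have "W ** B' = W' ** B' - dW ** B'" by (simp add: mm_diff_r)
    then show ?thesis using WB' by simp
  qed
  have hN1: "norm (F ** B') \<le> norm E / (1 - a * s)"
  proof -
    have "F ** B' = E ** (mat 1 - dW ** B')" using FE WB'2 by (simp add: matrix_mul_assoc[symmetric])
    then have "norm (F ** B') \<le> norm E * spec_norm (mat 1 - dW ** B')" by (metis norm_mm_le)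
    also have "\<dots> \<le> norm E * (1 + s * (a / (1 - a * s)))"
    proof (rule mult_left_mono)
      have "spec_norm (dW ** B') \<le> s * spec_norm B'" unfolding s_def by (rule spec_mult)
      also have "\<dots> \<le> s * (a / (1 - a * s))" by (rule mult_left_mono[OF sB' a0(2)])
      finally show "spec_norm (mat 1 - dW ** B') \<le> 1 + s * (a / (1 - a * s))"
        using spec_id_minus[of "dW ** B'"] by simp
    qed simp
    also have "1 + s * (a / (1 - a * s)) = 1 / (1 - a * s)" using xi1 by (simp add: field_simps)
    finally show ?thesis by simp
  qed
  define P where "P = B' ** W'"
  have Pt: "transpose P = P" using P' by (simp add: penrose_def P_def)
  have PP: "P ** P = P" using P' unfolding penrose_def P_def by (simp add: matrix_mul_assoc)
  have W'P: "W' ** P = W'" using P' unfolding penrose_def P_def by (simp add: matrix_mul_assoc)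
  have FP: "F ** P = F + E ** (dW ** (mat 1 - P))"
  proof -
    have "W ** (mat 1 - P) = (W' - dW) ** (mat 1 - P)" by (simp add: W'_def)
    also have "\<dots> = - (dW ** (mat 1 - P))" using W'P by (simp add: mm_diff_r mm_diff_l)
    finally have h: "W ** (mat 1 - P) = - (dW ** (mat 1 - P))" .
    have "F ** (mat 1 - P) = E ** (W ** (mat 1 - P))" using FE by (simp add: matrix_mul_assoc)
    also have "\<dots> = - (E ** (dW ** (mat 1 - P)))" using h by (simp add: matrix_matrix_mult_def vec_eq_iff sum_negf)
    finally have "F - F ** P = - (E ** (dW ** (mat 1 - P)))" by (simp add: mm_diff_l)
    then show ?thesis by (simp add: algebra_simps)
  qed
  have hD: "norm F - norm E * s \<le> norm (F ** B' ** W')"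
  proof -
    have "norm (E ** (dW ** (mat 1 - P))) \<le> norm E * spec_norm (dW ** (mat 1 - P))" by (rule norm_mm_le)
    also have "\<dots> \<le> norm E * s"
    proof (rule mult_left_mono)
      have "spec_norm (dW ** (mat 1 - P)) \<le> s * spec_norm (mat 1 - P)" unfolding s_def by (rule spec_mult)
      also have "\<dots> \<le> s * 1" by (rule mult_left_mono[OF spec_proj[OF Pt PP] a0(2)])
      finally show "spec_norm (dW ** (mat 1 - P)) \<le> s" by simp
    qed simp
    finally have h: "norm (E ** (dW ** (mat 1 - P))) \<le> norm E * s" .
    have "norm F \<le> norm (F ** P) + norm (E ** (dW ** (mat 1 - P)))"
      using FP norm_triangle_ineq4[of "F ** P" "E ** (dW ** (mat 1 - P))"] by simp
    then show ?thesis using h by (simp add: P_def matrix_mul_assoc)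
  qed
  have hN2: "norm (F ** B') \<le> norm (F ** B' ** W') * (a / (1 - a * s))"
  proof -
    have "F ** B' = (F ** B' ** W') ** B'" using WB' by (simp add: matrix_mul_assoc[symmetric])
    then have "norm (F ** B') \<le> norm (F ** B' ** W') * spec_norm B'" by (metis norm_mm_le)
    also have "\<dots> \<le> norm (F ** B' ** W') * (a / (1 - a * s))" by (rule mult_left_mono[OF sB']) simp
    finally show ?thesis .
  qed
  have hw: "norm W' \<le> norm W + norm dW" unfolding W'_def by (rule norm_triangle_ineq)
  have G1: "(norm (F ** B'))^2 * (norm W')^2 / (norm (F ** B' ** W'))^2
     \<le> (norm E)^2 * (norm W)^2 / (norm F)^2 * (1 + norm dW / norm W)^2
        * ((1 + rr * (a * s)) / (1 - nr * (a * s)))^2"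
    by (rule final_real[OF norm_ge_zero f0 apos a0(2) xi1 norm_ge_zero norm_ge_zero hN1 hD hN2
          w0 norm_ge_zero hw norm_ge_zero rr1 nr1 nxi])
  have gam: "(norm (F ** B))^2 * (norm W)^2 / (norm (F ** B ** W))^2 = (norm E)^2 * (norm W)^2 / (norm F)^2"
    using X XW by simp
  have delta: "norm dW / norm W \<le> a * s" using dW w0 by (simp add: divide_simps mult.commute)
  have G3: "g * (1 + norm dW / norm W)^2 * ((1 + rr * (a * s)) / (1 - nr * (a * s)))^2
            \<le> g * (1 + rr * (a * s)) ^ 4 / (1 - nr * (a * s))^2" if g0: "0 \<le> g" for g
  proof -
    have "norm dW / norm W \<le> rr * (a * s)"
      using delta rr1 a0 by (metis dual_order.trans mult_le_cancel_right1 mult_nonneg_nonneg not_le)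
    then have "(1 + norm dW / norm W)^2 \<le> (1 + rr * (a * s))^2"
      by (rule power_mono[OF add_left_mono]) (simp add: w0 zero_le_divide_iff)
    then have "g * (1 + norm dW / norm W)^2 * ((1 + rr * (a * s)) / (1 - nr * (a * s)))^2
       \<le> g * (1 + rr * (a * s))^2 * ((1 + rr * (a * s)) / (1 - nr * (a * s)))^2"
      using g0 by (simp add: mult_left_mono mult_right_mono)
    also have "\<dots> = g * (1 + rr * (a * s)) ^ 4 / (1 - nr * (a * s))^2"
      by (simp add: power_divide power2_eq_square power4_eq_xxxx)
    finally show ?thesis .
  qed
  have g0: "0 \<le> (norm E)^2 * (norm W)^2 / (norm F)^2" by simp
  show ?thesis
    unfolding Let_def frob_eq_norm
    using delta G1 G3[OF g0] gam
    unfolding F_def[symmetric] W'_def[symmetric] B_def[symmetric] B'_def[symmetric]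
      a_def[symmetric] s_def[symmetric] nr_def[symmetric] rr_def[symmetric]
    by simp
qed

end
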